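(* Let $b>1$, $p\ge1$, $R\subseteq\{0,\ldots,p-1\}$. Let $k$ be the greatest divisor of $p$ coprime with $b$, $d=p/k$, and $j$ the least integer $j\ge0$ such that $d$ divides $b^j$. If $s,s'$ are states of $\mathcal{A}_{R,p}$ with $s\equiv s'\pmod k$, then $s$ and $s'$ are $j$-ultimately-equivalent.
   Context: $A_b=\{0,\ldots,b-1\}$. $\mathcal{A}_{R,p}$: complete deterministic automaton over $A_b$ with states $\{0,\ldots,p-1\}$, initial $0$, final $R$, transitions $n\xrightarrow{a}(nb+a)\bmod p$. For an integer $m\ge0$, two states $s,s'$ are $m$-ultimately-equivalent if for every word $u$ with $|u|\ge m$, $s\cdot u=s'\cdot u$, where $s\cdot u$ is the state reached from $s$ by reading $u$. *)

theory Defs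
  imports Main
begin

record automaton =
  alph :: "nat set"
  states :: "nat set"
  init :: nat
  finals :: "nat set"
  trans :: "nat \<Rightarrow> nat \<Rightarrow> nat"

definition A_Rp :: "nat \<Rightarrow> nat set \<Rightarrow> nat \<Rightarrow> automaton" where
  "A_Rp b R p = \<lparr> alph = {0..<b}, states = {0..<p}, init = 0, finals = R,
                  trans = (\<lambda>n a. (n * b + a) mod p) \<rparr>"

definition run :: "automaton \<Rightarrow> nat \<Rightarrow> nat list \<Rightarrow> nat" where
  "run A s u = foldl (trans A) s u"

definition ult_equiv :: "automaton \<Rightarrow> nat \<Rightarrow> nat \<Rightarrow> nat \<Rightarrow> bool" where
  "ult_equiv A m s s' \<longleftrightarrow>
     (\<forall>u. set u \<subseteq> alph A \<longrightarrow> length u \<ge> m \<longrightarrow> run A s u = run A s' u)"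

end

theory Submission
  imports Defs "HOL-Computational_Algebra.Primes"
begin

lemma run_eq:
  fixes b p :: nat
  assumes "p > 0"
  shows "s < p \<Longrightarrow> s' < p \<Longrightarrow> s * b ^ length u mod p = s' * b ^ length u mod p
     \<Longrightarrow> foldl (\<lambda>n a. (n * b + a) mod p) s u = foldl (\<lambda>n a. (n * b + a) mod p) s' u"
proof (induction u arbitrary: s s')
  case Nil
  then show ?case by simp
next
  case (Cons a u)
  let ?B = "b ^ length u"
  have h: "s * b * ?B mod p = s' * b * ?B mod p" using Cons.prems(3)
    by (simp add: mult.assoc mult.commute mult.left_commute)
  have "(s * b + a) mod p * ?B mod p = (s * b * ?B + a * ?B) mod p"
    by (simp add: mod_mult_left_eq distrib_right)
  also have "\<dots> = (s' * b * ?B + a * ?B) mod p" using h by (metis mod_add_cong)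
  also have "\<dots> = (s' * b + a) mod p * ?B mod p"
    by (simp add: mod_mult_left_eq distrib_right)
  finally have "(s * b + a) mod p * ?B mod p = (s' * b + a) mod p * ?B mod p" .
  then show ?case using Cons.IH[of "(s * b + a) mod p" "(s' * b + a) mod p"] assms by simp
qed

lemma dvd_pow_of_primes:
  fixes d b :: nat
  assumes "d > 0" "b > 0" and pr: "\<And>q. prime q \<Longrightarrow> q dvd d \<Longrightarrow> q dvd b"
  shows "d dvd b ^ d"
proof (rule multiplicity_le_imp_dvd)
  show "d \<noteq> 0" using assms by simp
  fix q :: nat assume q: "prime q"
  show "multiplicity q d \<le> multiplicity q (b ^ d)"
  proof (cases "q dvd d")
    case False
    then have "multiplicity q d = 0" by (simp add: not_dvd_imp_multiplicity_0)
    then show ?thesis by simp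
  next
    case True
    then have qb: "q dvd b" using pr q by blast
    have m1: "multiplicity q b \<ge> 1" using qb q assms(2)
      by (simp add: Suc_le_eq prime_multiplicity_gt_zero_iff)
    have "q ^ multiplicity q d dvd d" by (rule multiplicity_dvd)
    then have "q ^ multiplicity q d \<le> d" using assms(1) by (simp add: dvd_imp_le)
    moreover have "multiplicity q d < 2 ^ multiplicity q d" by (rule less_exp)
    moreover have "2 ^ multiplicity q d \<le> q ^ multiplicity q d"
      using prime_ge_2_nat[OF q] by (simp add: power_mono)
    ultimately have "multiplicity q d \<le> d" by linarith
    also have "d \<le> d * multiplicity q b" using m1 by simp
    also have "\<dots> = multiplicity q (b ^ d)" using q assms(2)
      by (simp add: prime_elem_multiplicity_power_distrib)
    finally show ?thesis .
  qed
qed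

theorem lemma21:
  fixes b p k d j s s' :: nat and R :: "nat set"
  assumes "b > 1" and "p \<ge> 1" and "R \<subseteq> {0..<p}"
    and "k = (GREATEST k. k dvd p \<and> coprime k b)"
    and "d = p div k"
    and "j = (LEAST j. d dvd b ^ j)"
    and "s \<in> {0..<p}" and "s' \<in> {0..<p}"
    and "s mod k = s' mod k"
  shows "ult_equiv (A_Rp b R p) j s s'"
proof -
  have ex: "\<exists>k. k dvd p \<and> coprime k b" by (intro exI[of _ 1]) simp
  have bd: "\<forall>y. y dvd p \<and> coprime y b \<longrightarrow> y \<le> p" using assms(2)
    by (simp add: dvd_imp_le)
  have kp: "k dvd p \<and> coprime k b" unfolding assms(4)
    using GreatestI_ex_nat[of "\<lambda>k. k dvd p \<and> coprime k b" p] ex bd by blast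
  have kmax: "\<And>y. y dvd p \<Longrightarrow> coprime y b \<Longrightarrow> y \<le> k" unfolding assms(4)
    using Greatest_le_nat[of "\<lambda>k. k dvd p \<and> coprime k b" _ p] bd by blast
  have pkd: "p = k * d" using kp assms(5) by simp
  have dpos: "d > 0" using pkd assms(2) by (metis gr0I mult_0_right not_one_le_zero)
  have kpos: "k > 0" using pkd assms(2) by (metis gr0I mult_0 not_one_le_zero)
  have primes: "q dvd b" if q: "prime q" "q dvd d" for q
  proof (rule ccontr)
    assume "\<not> q dvd b"
    then have "coprime q b" using q(1) by (simp add: prime_imp_coprime)
    then have "coprime (k * q) b" using kp by simp
    moreover have "k * q dvd p" using pkd q(2) by simp
    ultimately have "k * q \<le> k" using kmax by blast
    moreover have "q > 1" using q(1) prime_gt_1_nat by blast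
    ultimately show False using kpos by simp
  qed
  have "d dvd b ^ d" using dvd_pow_of_primes[OF dpos _ primes] assms(1) by simp
  then have dj: "d dvd b ^ j" unfolding assms(6) by (rule LeastI)
  show ?thesis unfolding ult_equiv_def
  proof (intro allI impI)
    fix u :: "nat list" assume "set u \<subseteq> alph (A_Rp b R p)" "length u \<ge> j"
    let ?n = "length u"
    have "d dvd b ^ ?n" using dj \<open>length u \<ge> j\<close> assms(1)
      by (meson dvd_trans le_imp_power_dvd)
    then have di: "int d dvd int (b ^ ?n)" by (simp only: of_nat_dvd_iff)
    have ki: "int k dvd int s - int s'" using assms(9)
      by (metis mod_eq_dvd_iff of_nat_mod)
    have "int k * int d dvd (int s - int s') * int (b ^ ?n)" using ki di by (rule mult_dvd_mono)
    then have "int p dvd int (s * b ^ ?n) - int (s' * b ^ ?n)" using pkd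
      by (simp add: left_diff_distrib)
    then have "s * b ^ ?n mod p = s' * b ^ ?n mod p"
      by (metis mod_eq_dvd_iff of_nat_eq_iff of_nat_mod)
    then show "run (A_Rp b R p) s u = run (A_Rp b R p) s' u"
      unfolding run_def A_Rp_def using run_eq[of p s s' b u] assms(2,7,8) by simp
  qed
qed

end
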